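(* For every positive integer $n$, as formal power series in $z$, \[ \frac{(-tzq;q)_{n}}{(zq;q)_{n}} = 1+ \sum_{k \geq 1} z^k q^k \left( \overline{{ n+k-1 \brack k}}_{q,t} + t\, \overline{ { n+k-2 \brack k-1}}_{q,t} \right). \]
   Context: An overpartition is a partition in which the last occurrence of each distinct part size may be overlined; its weight $|\lambda|$ is the sum of its parts. For integers $0\le b\le a$, $\overline{{a \brack b}}_{q,t}=\sum_{\lambda} t^{\#_o(\lambda)} q^{|\lambda|}$, the sum over all overpartitions $\lambda$ with largest part at most $a-b$ and at most $b$ parts, $\#_o(\lambda)$ being the number of overlined parts. $(x;q)_k=\prod_{j=1}^k(1-xq^{j-1})$. *)

theory Defs
  imports "HOL-Library.Multiset" "HOL-Computational_Algebra.Formal_Power_Series"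
begin

text \<open>An overpartition is represented as a pair (P, Ov): P is the multiset of (positive)
  parts, O is the set of part sizes whose last occurrence is overlined (Ov \<subseteq> set of parts).\<close>

definition overpartitions_bounded :: "nat \<Rightarrow> nat \<Rightarrow> (nat multiset \<times> nat set) set" where
  "overpartitions_bounded m b =
     {(P, Ov). 0 \<notin># P \<and> (\<forall>x\<in>#P. x \<le> m) \<and> size P \<le> b \<and> Ov \<subseteq> set_mset P}"

definition over_gauss :: "nat \<Rightarrow> nat \<Rightarrow> 'a::comm_ring_1 \<Rightarrow> 'a \<Rightarrow> 'a" where
  "over_gauss a b q t =
     (\<Sum>(P, Ov)\<in>overpartitions_bounded (a - b) b. t ^ card Ov * q ^ sum_mset P)"

definition qpoch :: "'a::comm_ring_1 \<Rightarrow> 'a \<Rightarrow> nat \<Rightarrow> 'a" where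
  "qpoch x q k = (\<Prod>j<k. (1 - x * q ^ j))"

end

theory Submission imports Defs begin
unbundle fps_syntax

abbreviation OB where "OB \<equiv> overpartitions_bounded"

lemma OB_finite: "finite (OB m b)"
proof -
  have "OB m b \<subseteq> (\<lambda>(xs, Ov). (mset xs, Ov)) ` ({xs. set xs \<subseteq> {..m} \<and> length xs \<le> b} \<times> Pow {..m})"
  proof
    fix x assume x: "x \<in> OB m b"
    obtain P Ov where xe: "x = (P, Ov)" by (cases x)
    obtain xs where xs: "mset xs = P" using ex_mset by blast
    have "set xs \<subseteq> {..m}" "length xs \<le> b" "Ov \<subseteq> {..m}"
      using x xs by (auto simp: xe overpartitions_bounded_def)
    then show "x \<in> (\<lambda>(xs, Ov). (mset xs, Ov)) ` ({xs. set xs \<subseteq> {..m} \<and> length xs \<le> b} \<times> Pow {..m})"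
      using xs xe by force
  qed
  then show ?thesis
    by (rule finite_subset) (intro finite_imageI finite_cartesian_product finite_lists_length_le, auto)
qed

definition S :: "nat \<Rightarrow> nat \<Rightarrow> 'a::comm_ring_1 \<Rightarrow> 'a \<Rightarrow> 'a" where
  "S m b q t = (\<Sum>(P, Ov)\<in>OB m b. t ^ card Ov * q ^ sum_mset P)"

lemma OB_0b: "OB 0 b = {({#}, {})}"
  by (auto simp: overpartitions_bounded_def) (metis less_eq_nat.simps(1) multiset_nonemptyE le_zero_eq)

lemma OB_m0: "OB m 0 = {({#}, {})}"
  by (auto simp: overpartitions_bounded_def)

lemma S_0b: "S 0 b q t = 1" by (simp add: S_def OB_0b)
lemma S_m0: "S m 0 q t = 1" by (simp add: S_def OB_m0)

lemma OB_split:
  "OB (Suc k) (Suc b) = OB k (Suc b) \<union> (\<lambda>(P, Ov). (add_mset (Suc k) P, Ov)) ` OB (Suc k) b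
     \<union> (\<lambda>(P, Ov). (add_mset (Suc k) P, insert (Suc k) Ov)) ` OB k b"
  (is "?L = ?A \<union> ?B \<union> ?C")
proof
  show "?A \<union> ?B \<union> ?C \<subseteq> ?L"
    by (auto simp: overpartitions_bounded_def) (meson le_SucI)
  show "?L \<subseteq> ?A \<union> ?B \<union> ?C"
  proof
    fix x assume x: "x \<in> ?L"
    obtain P Ov where xe: "x = (P, Ov)" by (cases x)
    have P0: "0 \<notin># P" and Pm: "\<forall>y\<in>#P. y \<le> Suc k" and Ps: "size P \<le> Suc b" and Ovs: "Ov \<subseteq> set_mset P"
      using x by (auto simp: xe overpartitions_bounded_def)
    show "x \<in> ?A \<union> ?B \<union> ?C"
    proof (cases "Suc k \<in># P")
      case False
      then have "x \<in> ?A" using P0 Pm Ps Ovs by (force simp: xe overpartitions_bounded_def le_Suc_eq)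
      then show ?thesis by blast
    next
      case True
      define P' where "P' = P - {#Suc k#}"
      have PP: "P = add_mset (Suc k) P'" using True by (simp add: P'_def)
      have s': "size P' \<le> b" using Ps PP by simp
      show ?thesis
      proof (cases "Suc k \<in> Ov \<and> Suc k \<notin># P'")
        case True
        have "(P', Ov - {Suc k}) \<in> OB k b"
          using P0 Pm Ovs s' True PP by (force simp: overpartitions_bounded_def le_Suc_eq)
        moreover have "x = (add_mset (Suc k) P', insert (Suc k) (Ov - {Suc k}))"
          using True PP xe by auto
        ultimately have "x \<in> ?C" by force
        then show ?thesis by blast
      next
        case False
        have "(P', Ov) \<in> OB (Suc k) b"
          using P0 Pm Ovs s' False PP by (force simp: overpartitions_bounded_def)
        moreover have "x = (add_mset (Suc k) P', Ov)"
          using PP xe by auto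
        ultimately have "x \<in> ?B" by force
        then show ?thesis by blast
      qed
    qed
  qed
qed

lemma S_rec:
  "S (Suc k) (Suc b) q t = S k (Suc b) q t + q ^ Suc k * S (Suc k) b q t + t * q ^ Suc k * S k b q t"
proof -
  let ?w = "\<lambda>(P, Ov). t ^ card Ov * q ^ sum_mset P"
  let ?f = "\<lambda>(P, Ov). (add_mset (Suc k) P, Ov)"
  let ?g = "\<lambda>(P, Ov). (add_mset (Suc k) P, insert (Suc k) Ov)"
  have injf: "inj_on ?f (OB (Suc k) b)" by (auto simp: inj_on_def)
  have injg: "inj_on ?g (OB k b)"
  proof (rule inj_onI)
    fix x y assume x: "x \<in> OB k b" and y: "y \<in> OB k b" and e: "?g x = ?g y"
    obtain P1 O1 where xe: "x = (P1, O1)" by (cases x)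
    obtain P2 O2 where ye: "y = (P2, O2)" by (cases y)
    have "Suc k \<notin> O1" "Suc k \<notin> O2" using x y
      by (auto simp: xe ye overpartitions_bounded_def dest!: subsetD)
    then show "x = y" using e xe ye
      by (auto simp: insert_ident)
  qed
  have d1: "OB k (Suc b) \<inter> ?f ` OB (Suc k) b = {}"
    by (auto simp: overpartitions_bounded_def)
  have d2: "(OB k (Suc b) \<union> ?f ` OB (Suc k) b) \<inter> ?g ` OB k b = {}"
    by (auto simp: overpartitions_bounded_def) (metis Suc_n_not_le_n)
  have wf: "sum ?w (?f ` OB (Suc k) b) = q ^ Suc k * S (Suc k) b q t"
    unfolding sum.reindex[OF injf] S_def sum_distrib_left
    by (rule sum.cong) (auto simp: power_add)
  have wg: "sum ?w (?g ` OB k b) = t * q ^ Suc k * S k b q t"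
    unfolding sum.reindex[OF injg] S_def sum_distrib_left
  proof (rule sum.cong)
    fix x assume x: "x \<in> OB k b"
    obtain P1 O1 where xe: "x = (P1, O1)" by (cases x)
    have "Suc k \<notin> O1" using x
      by (auto simp: xe overpartitions_bounded_def dest!: subsetD)
    moreover have "finite O1" using x
      by (auto simp: xe overpartitions_bounded_def intro: finite_subset)
    ultimately show "(?w \<circ> ?g) x = t * q ^ Suc k * ?w x"
      by (simp add: xe power_add mult_ac)
  qed simp
  have fA: "finite (OB k (Suc b) \<union> ?f ` OB (Suc k) b)" by (simp add: OB_finite)
  have fC: "finite (?g ` OB k b)" by (simp add: OB_finite)
  have "S (Suc k) (Suc b) q t = sum ?w (OB k (Suc b) \<union> ?f ` OB (Suc k) b \<union> ?g ` OB k b)"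
    unfolding S_def OB_split ..
  also have "\<dots> = sum ?w (OB k (Suc b) \<union> ?f ` OB (Suc k) b) + sum ?w (?g ` OB k b)"
    by (rule sum.union_disjoint[OF fA fC d2])
  also have "sum ?w (OB k (Suc b) \<union> ?f ` OB (Suc k) b) = sum ?w (OB k (Suc b)) + sum ?w (?f ` OB (Suc k) b)"
    by (rule sum.union_disjoint[OF OB_finite _ d1]) (simp add: OB_finite)
  finally show ?thesis using wf wg by (simp add: S_def)
qed


lemma coeff_lin: "((1 + fps_const c * fps_X) * (F::'a::comm_ring_1 fps)) $ n = F $ n + (if n = 0 then 0 else c * F $ (n - 1))"
proof -
  have "(1 + fps_const c * fps_X) * F = F + fps_const c * (fps_X * F)" by (simp add: algebra_simps)
  then show ?thesis by simp
qed

lemma coeff_lin': "((1 - fps_const c * fps_X) * (F::'a::comm_ring_1 fps)) $ n = F $ n - (if n = 0 then 0 else c * F $ (n - 1))"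
proof -
  have "(1 - fps_const c * fps_X) * F = F - fps_const c * (fps_X * F)" by (simp add: algebra_simps)
  then show ?thesis by simp
qed

definition G :: "'a::field \<Rightarrow> 'a \<Rightarrow> nat \<Rightarrow> 'a fps" where
  "G q t m = Abs_fps (\<lambda>k. q ^ k * S m k q t)"

lemma G0: "(1 - fps_const q * fps_X) * G q t 0 = 1"
proof (rule fps_ext)
  fix n show "((1 - fps_const q * fps_X) * G q t 0) $ n = (1::'a fps) $ n"
    by (cases n) (simp_all add: coeff_lin' G_def S_0b)
qed

lemma G_rec: "(1 - fps_const (q ^ (m + 2)) * fps_X) * G q t (Suc m) = (1 + fps_const (t * q ^ (m + 2)) * fps_X) * G q t m"
proof (rule fps_ext)
  fix n show "((1 - fps_const (q ^ (m + 2)) * fps_X) * G q t (Suc m)) $ n = ((1 + fps_const (t * q ^ (m + 2)) * fps_X) * G q t m) $ n"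
  proof (cases n)
    case 0 then show ?thesis by (simp add: coeff_lin' coeff_lin G_def S_m0)
  next
    case (Suc b)
    show ?thesis unfolding Suc coeff_lin' coeff_lin
      by (simp add: G_def S_rec algebra_simps)
  qed
qed

lemma qfac1: "1 - (fps_const q * fps_X) * fps_const q ^ j = 1 - fps_const (q ^ Suc j) * (fps_X :: 'a::field fps)"
  by (simp add: fps_const_power[symmetric] fps_const_mult[symmetric] mult_ac del: fps_const_power fps_const_mult)

lemma qfac2: "1 - (- (fps_const (t * q) * fps_X)) * fps_const q ^ j = 1 + fps_const (t * q ^ Suc j) * (fps_X :: 'a::field fps)"
  by (simp add: fps_const_power[symmetric] fps_const_mult[symmetric] mult_ac del: fps_const_power fps_const_mult)

lemma main_ind:
  "(1 + fps_const (t * q) * fps_X) * G q t m * qpoch (fps_const q * fps_X) (fps_const q) (Suc m)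
    = qpoch (- (fps_const (t * q) * fps_X)) (fps_const q) (Suc m)"
proof (induction m)
  case 0
  then show ?case using G0[of q t] by (simp add: qpoch_def qfac1 qfac2 mult_ac)
next
  case (Suc m)
  have "(1 + fps_const (t * q) * fps_X) * G q t (Suc m) * qpoch (fps_const q * fps_X) (fps_const q) (Suc (Suc m))
     = (1 + fps_const (t * q) * fps_X) * ((1 - fps_const (q ^ (m + 2)) * fps_X) * G q t (Suc m)) * qpoch (fps_const q * fps_X) (fps_const q) (Suc m)"
    by (simp add: qpoch_def qfac1 mult_ac)
  also have "\<dots> = (1 + fps_const (t * q ^ (m + 2)) * fps_X) * ((1 + fps_const (t * q) * fps_X) * G q t m * qpoch (fps_const q * fps_X) (fps_const q) (Suc m))"
    by (simp only: G_rec) (simp add: mult_ac)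
  also have "\<dots> = qpoch (- (fps_const (t * q) * fps_X)) (fps_const q) (Suc (Suc m))"
    by (simp only: Suc.IH) (simp add: qpoch_def qfac2 mult_ac)
  finally show ?case .
qed


lemma prod_nth0: fixes k :: nat shows "(\<Prod>j<k. f j) $ 0 = (\<Prod>j<k. (f j :: 'a::comm_ring_1 fps) $ 0)"
  by (induction k) simp_all

lemma over_gauss_S: "over_gauss a b q t = S (a - b) b q t"
  by (simp add: over_gauss_def S_def)

theorem theorem3p2:
  fixes q t :: "'a::field" and n :: nat
  assumes "n \<ge> 1"
  shows "qpoch (- (fps_const (t * q) * fps_X)) (fps_const q) n
           / qpoch (fps_const q * fps_X) (fps_const q) n
         = Abs_fps (\<lambda>k. if k = 0 then 1
              else q ^ k * (over_gauss (n + k - 1) k q t + t * over_gauss (n + k - 2) (k - 1) q t))"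
proof -
  obtain m where nm: "n = Suc m" using assms by (cases n) auto
  let ?R = "Abs_fps (\<lambda>k. if k = 0 then 1
              else q ^ k * (over_gauss (n + k - 1) k q t + t * over_gauss (n + k - 2) (k - 1) q t))"
  let ?D = "qpoch (fps_const q * fps_X) (fps_const q) n"
  have R: "?R = (1 + fps_const (t * q) * fps_X) * G q t m"
  proof (rule fps_ext)
    fix k show "?R $ k = ((1 + fps_const (t * q) * fps_X) * G q t m) $ k"
    proof (cases k)
      case 0 then show ?thesis by (simp add: coeff_lin G_def S_m0)
    next
      case (Suc j)
      have e1: "n + k - 1 - k = m" and e2: "n + k - 2 - (k - 1) = m" using nm Suc by auto
      show ?thesis unfolding coeff_lin using Suc
        by (simp add: over_gauss_S e1 e2 G_def algebra_simps nm)
    qed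
  qed
  have D0: "?D $ 0 \<noteq> 0"
    by (simp add: qpoch_def prod_nth0)
  have "qpoch (- (fps_const (t * q) * fps_X)) (fps_const q) n = ?R * ?D"
    using main_ind[of t q m] by (simp add: R nm)
  then have "qpoch (- (fps_const (t * q) * fps_X)) (fps_const q) n / ?D = ?R * (?D * inverse ?D)"
    by (simp add: fps_divide_unit[OF D0] mult.assoc)
  also have "\<dots> = ?R" using inverse_mult_eq_1'[OF D0] by simp
  finally show ?thesis .
qed

end
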